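(* Let $p\in\mathbb{R}^d$ with $p\neq 0$, put $\hat p=p/\lVert p\rVert$, let $c=\hat c_{\hat p}$ be the class predicted for $\hat p$, and let $c'$ be the class in $\{0,\dots,k-1\}\setminus\{c\}$ with the highest value of $P(\hat c_{\hat p}=c')$. Define $$\epsilon_c=\sqrt{1+\frac{1}{2d}\Big(\hat p^T M^c\hat p-\hat p^T M^{c'}\hat p\Big)}-1,$$ and suppose $\epsilon_c>0$. If $$\lVert p\rVert\ \ge\ \frac{2}{\epsilon_c\sqrt{4-\epsilon_c^2}},$$ then for every $x\in\mathbb{R}^d$ with $\lVert x\rVert=1$, the normalized perturbed input $y=\frac{p+x}{\lVert p+x\rVert}$ is classified as $c$. That is, $P(\hat c_y=c)\ge P(\hat c_y=\tilde c)$ for all $\tilde c\in\{0,\dots,k-1\}$, so $c$ attains the maximum defining $\hat c_y$.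
   Context: Setting (noiseless PQC classifier acting on amplitude-encoded real data). We use the following notation. - $D\ge 0$ and $K\ge 0$ are integers. Put $d=2^D$, $k'=2^K$ and $n=2^{D+K}$. The number of classes $k$ satisfies $1\le k\le k'$. - $U\in\mathbb{C}^{n\times n}$ is a fixed unitary matrix, and $\lVert\cdot\rVert$ denotes the Euclidean norm. - All vectors and matrices are indexed from $0$. - For a unit vector $x\in\mathbb{R}^d$, let $e_0\in\mathbb{C}^{k'}$ be the first standard basis vector, and let $y=U(x\otimes e_0)\in\mathbb{C}^n$. Here $(x\otimes e_0)_{k's}=x_s$ and all other entries of $x\otimes e_0$ are $0$. - For $c\in\{0,\dots,k-1\}$, define the class-$c$ probability $P(\hat c_x=c)=\sum_{t=0}^{d-1}\lvert y_{k't+c}\rvert^2$. This is the probability that measuring the ancillary register gives $c$. - The predicted class is $\hat c_x=\arg\max_{c\in\{0,\dots,k-1\}}P(\hat c_x=c)$. - For each $c$, the $d\times d$ matrix $M^c$ is defined by $M^c_{ij}=\sum_{t=0}^{d-1}U^*_{k't+c,\,k'i}\,U_{k't+c,\,k'j}$, where $^*$ denotes complex conjugation. *)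

theory Defs
  imports Complex_Main
begin

text \<open>Matrices and vectors are functions on natural-number indices (indexed from 0),
  with explicit bounds. d = 2^D, k' = 2^K, n = 2^(D+K).\<close>

definition unitary_mat :: "nat \<Rightarrow> (nat \<Rightarrow> nat \<Rightarrow> complex) \<Rightarrow> bool" where
  "unitary_mat n U \<longleftrightarrow>
     (\<forall>i<n. \<forall>j<n. (\<Sum>t<n. cnj (U t i) * U t j) = (if i = j then 1 else 0)) \<and>
     (\<forall>i<n. \<forall>j<n. (\<Sum>t<n. U i t * cnj (U j t)) = (if i = j then 1 else 0))"

definition vnorm :: "nat \<Rightarrow> (nat \<Rightarrow> real) \<Rightarrow> real" where
  "vnorm d x = sqrt (\<Sum>i<d. (x i)\<^sup>2)"

definition tensor_e0 :: "nat \<Rightarrow> nat \<Rightarrow> (nat \<Rightarrow> real) \<Rightarrow> nat \<Rightarrow> complex" where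
  "tensor_e0 D K x r = (if r mod 2^K = 0 \<and> r div 2^K < 2^D then complex_of_real (x (r div 2^K)) else 0)"

definition out_state :: "nat \<Rightarrow> nat \<Rightarrow> (nat \<Rightarrow> nat \<Rightarrow> complex) \<Rightarrow> (nat \<Rightarrow> real) \<Rightarrow> nat \<Rightarrow> complex" where
  "out_state D K U x r = (\<Sum>s<2^(D+K). U r s * tensor_e0 D K x s)"

definition class_prob :: "nat \<Rightarrow> nat \<Rightarrow> (nat \<Rightarrow> nat \<Rightarrow> complex) \<Rightarrow> (nat \<Rightarrow> real) \<Rightarrow> nat \<Rightarrow> real" where
  "class_prob D K U x c = (\<Sum>t<2^D. (cmod (out_state D K U x (2^K * t + c)))\<^sup>2)"

definition Mmat :: "nat \<Rightarrow> nat \<Rightarrow> (nat \<Rightarrow> nat \<Rightarrow> complex) \<Rightarrow> nat \<Rightarrow> nat \<Rightarrow> nat \<Rightarrow> complex" where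
  "Mmat D K U c i j = (\<Sum>t<2^D. cnj (U (2^K * t + c) (2^K * i)) * U (2^K * t + c) (2^K * j))"

text \<open>v^T M^c v for a real vector v (a real number since M^c is Hermitian; we take Re).\<close>
definition qform :: "nat \<Rightarrow> nat \<Rightarrow> (nat \<Rightarrow> nat \<Rightarrow> complex) \<Rightarrow> nat \<Rightarrow> (nat \<Rightarrow> real) \<Rightarrow> real" where
  "qform D K U c v = Re (\<Sum>i<2^D. \<Sum>j<2^D. complex_of_real (v i) * Mmat D K U c i j * complex_of_real (v j))"

end

theory Submission imports Defs "HOL-Analysis.L2_Norm" begin

lemma out_state_eq:
  "out_state D K U x r = (\<Sum>s<2^D. U r (2^K*s) * complex_of_real (x s))"
proof -
  let ?f = "\<lambda>s. U r s * tensor_e0 D K x s"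
  have inj: "inj_on (\<lambda>j::nat. 2^K*j) {..<2^D}" by (auto simp: inj_on_def)
  have sub: "(\<lambda>j::nat. 2^K*j) ` {..<2^D} \<subseteq> {..<2^(D+K)}"
    by (auto simp: power_add)
  have "(\<Sum>s<2^(D+K). ?f s) = (\<Sum>s\<in>(\<lambda>j. 2^K*j) ` {..<2^D}. ?f s)"
  proof (rule sum.mono_neutral_right[OF _ sub])
    show "\<forall>i::nat\<in>{..<2 ^ (D + K)} - (\<lambda>j. 2^K*j) ` {..<2^D}. ?f i = 0"
    proof
      fix i :: nat assume i: "i \<in> {..<2 ^ (D + K)} - (\<lambda>j. 2^K*j) ` {..<2^D}"
      show "?f i = 0"
      proof (cases "i mod 2^K = 0 \<and> i div 2^K < 2^D")
        case True
        then have "i = 2^K * (i div 2^K)" by (metis div_mult_mod_eq add_0_right mult.commute)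
        with True i show ?thesis by auto
      qed (auto simp add: tensor_e0_def)
    qed
  qed simp
  also have "\<dots> = (\<Sum>j<2^D. ?f (2^K*j))" by (simp add: sum.reindex inj)
  also have "\<dots> = (\<Sum>s<2^D. U r (2^K*s) * complex_of_real (x s))"
    by (simp add: tensor_e0_def)
  finally show ?thesis by (simp add: out_state_def)
qed

lemma out_state_add:
  "out_state D K U (\<lambda>i. a i + b i) r = out_state D K U a r + out_state D K U b r"
  by (simp add: out_state_eq sum.distrib distrib_left)

lemma out_state_scale:
  "out_state D K U (\<lambda>i. c * a i) r = complex_of_real c * out_state D K U a r"
  by (simp add: out_state_eq sum_distrib_left mult_ac)

definition NN :: "nat \<Rightarrow> nat \<Rightarrow> (nat \<Rightarrow> nat \<Rightarrow> complex) \<Rightarrow> (nat \<Rightarrow> real) \<Rightarrow> nat \<Rightarrow> real" where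
  "NN D K U v c = L2_set (\<lambda>t. cmod (out_state D K U v (2^K*t+c))) {..<2^D}"

lemma cp_NN: "class_prob D K U v c = (NN D K U v c)^2"
  unfolding NN_def L2_set_def class_prob_def by (simp add: sum_nonneg mult.commute)

lemma NN_scale: "NN D K U (\<lambda>i. c * a i) ct = \<bar>c\<bar> * NN D K U a ct"
  unfolding NN_def out_state_scale norm_mult
  by (simp add: L2_set_right_distrib)

lemma NN_add: "NN D K U (\<lambda>i. a i + b i) ct \<le> NN D K U a ct + NN D K U b ct"
proof -
  have "NN D K U (\<lambda>i. a i + b i) ct \<le> L2_set (\<lambda>t. cmod (out_state D K U a (2^K*t+ct)) + cmod (out_state D K U b (2^K*t+ct))) {..<2^D}"
    unfolding NN_def out_state_add by (rule L2_set_mono) (auto intro: norm_triangle_ineq)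
  also have "\<dots> \<le> NN D K U a ct + NN D K U b ct" unfolding NN_def by (rule L2_set_triangle_ineq)
  finally show ?thesis .
qed

lemma cp_scale: "class_prob D K U (\<lambda>i. c * a i) ct = c^2 * class_prob D K U a ct"
  by (simp add: cp_NN NN_scale power_mult_distrib)

lemma energy:
  assumes hU: "unitary_mat (2^(D+K)) U"
  shows "(\<Sum>r<2^(D+K). (cmod (out_state D K U v r))^2) = (\<Sum>s<(2::nat)^D. (v s)^2)"
proof -
  let ?k = "(2::nat)^K"
  have col: "\<And>i j. i < 2^(D+K) \<Longrightarrow> j < 2^(D+K) \<Longrightarrow> (\<Sum>t<2^(D+K). cnj (U t i) * U t j) = (if i = j then 1 else 0)"
    using hU unfolding unitary_mat_def by blast
  have lt: "\<And>s. s < (2::nat)^D \<Longrightarrow> ?k * s < 2^(D+K)"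
    by (simp add: power_add)
  have "complex_of_real (\<Sum>r<2^(D+K). (cmod (out_state D K U v r))^2)
      = (\<Sum>r<2^(D+K). cnj (out_state D K U v r) * out_state D K U v r)"
    unfolding of_real_sum by (intro sum.cong refl) (simp add: complex_norm_square mult.commute del: of_real_power)
  also have "\<dots> = (\<Sum>r<2^(D+K). \<Sum>s<2^D. \<Sum>s'<2^D. complex_of_real (v s * v s') * (cnj (U r (?k*s)) * U r (?k*s')))"
    by (intro sum.cong refl) (simp only: out_state_eq cnj_sum sum_product complex_cnj_mult complex_cnj_complex_of_real of_real_mult, intro sum.cong refl, simp add: mult_ac)
  also have "\<dots> = (\<Sum>s<2^D. \<Sum>s'<2^D. complex_of_real (v s * v s') * (\<Sum>r<2^(D+K). cnj (U r (?k*s)) * U r (?k*s')))"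
    by (simp add: sum_distrib_left sum.swap[of _ "{..<2^(D+K)}"])
  also have "\<dots> = (\<Sum>s<2^D. \<Sum>s'<2^D. complex_of_real (v s * v s') * (if s = s' then 1 else 0))"
    by (intro sum.cong refl) (simp add: col lt)
  also have "\<dots> = (\<Sum>s<2^D. \<Sum>s'<2^D. (if s = s' then complex_of_real (v s * v s') else 0))"
    by (intro sum.cong refl) auto
  also have "\<dots> = complex_of_real (\<Sum>s<(2::nat)^D. (v s)^2)"
    by (simp add: power2_eq_square sum.delta)
  finally show ?thesis by (simp only: of_real_eq_iff)
qed

lemma cp_le:
  assumes hU: "unitary_mat (2^(D+K)) U" and c: "c < 2^K"
  shows "class_prob D K U v c \<le> (\<Sum>s<(2::nat)^D. (v s)^2)"
proof -
  have inj: "inj_on (\<lambda>t::nat. 2^K*t + c) {..<2^D}" by (auto simp: inj_on_def)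
  have sub: "(\<lambda>t::nat. 2^K*t + c) ` {..<2^D} \<subseteq> {..<2^(D+K)}"
  proof
    fix r assume "r \<in> (\<lambda>t::nat. 2^K*t + c) ` {..<2^D}"
    then obtain t where t: "t < 2^D" "r = 2^K*t + c" by auto
    have "2^K*t + c < 2^K*(t+1)" using c by simp
    also have "\<dots> \<le> 2^K * 2^D" using t by (intro mult_left_mono) auto
    finally show "r \<in> {..<2^(D+K)}" using t by (simp add: power_add mult.commute)
  qed
  have "class_prob D K U v c = (\<Sum>r\<in>(\<lambda>t::nat. 2^K*t + c) ` {..<2^D}. (cmod (out_state D K U v r))^2)"
    unfolding class_prob_def by (simp add: sum.reindex inj)
  also have "\<dots> \<le> (\<Sum>r<2^(D+K). (cmod (out_state D K U v r))^2)"
    by (rule sum_mono2[OF _ sub]) auto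
  also have "\<dots> = (\<Sum>s<(2::nat)^D. (v s)^2)" by (rule energy[OF hU])
  finally show ?thesis .
qed

lemma qform_cp: "qform D K U c v = class_prob D K U v c"
proof -
  let ?k = "(2::nat)^K"
  have "complex_of_real (class_prob D K U v c)
     = (\<Sum>t<2^D. cnj (out_state D K U v (?k*t+c)) * out_state D K U v (?k*t+c))"
    unfolding class_prob_def unfolding of_real_sum by (intro sum.cong refl) (simp add: complex_norm_square mult.commute del: of_real_power)
  also have "\<dots> = (\<Sum>t<2^D. \<Sum>i<2^D. \<Sum>j<2^D. complex_of_real (v i) * (cnj (U (?k*t+c) (?k*i)) * U (?k*t+c) (?k*j)) * complex_of_real (v j))"
    by (intro sum.cong refl) (simp only: out_state_eq cnj_sum sum_product complex_cnj_mult complex_cnj_complex_of_real of_real_mult, intro sum.cong refl, simp add: mult_ac)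
  also have "\<dots> = (\<Sum>i<2^D. \<Sum>t<2^D. \<Sum>j<2^D. complex_of_real (v i) * (cnj (U (?k*t+c) (?k*i)) * U (?k*t+c) (?k*j)) * complex_of_real (v j))"
    by (rule sum.swap)
  also have "\<dots> = (\<Sum>i<2^D. \<Sum>j<2^D. \<Sum>t<2^D. complex_of_real (v i) * (cnj (U (?k*t+c) (?k*i)) * U (?k*t+c) (?k*j)) * complex_of_real (v j))"
    by (rule sum.cong[OF refl], rule sum.swap)
  also have "\<dots> = (\<Sum>i<2^D. \<Sum>j<2^D. complex_of_real (v i) * Mmat D K U c i j * complex_of_real (v j))"
    unfolding Mmat_def sum_distrib_left sum_distrib_right by simp
  finally show ?thesis unfolding qform_def by (metis Re_complex_of_real)
qed

lemma eps_arith: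
  fixes r a b d s e w :: real
  assumes d: "d \<ge> 1" and a1: "a \<le> 1" and a0: "a \<ge> 0" and b0: "b \<ge> 0"
    and s_def: "s = (1 / (2 * d)) * (a^2 - b^2)"
    and e_def: "e = sqrt (1 + s) - 1" and e0: "0 < e"
    and hr: "r \<ge> 2 / (e * sqrt (4 - e^2))"
  shows "r * (a - b) \<ge> 2"
proof -
  have "sqrt 1 < sqrt (1 + s)" using e0 e_def by simp
  then have s0: "s > 0" by simp
  have sd: "a^2 - b^2 = 2 * d * s" using s_def d by simp
  have "2 * d * s > 0" using s0 d by simp
  then have ab2: "a^2 > b^2" using sd by linarith
  then have ab: "a > b" using a0 by (rule power2_less_imp_less)
  have "a^2 \<le> 1" using a1 a0 by (simp add: power_le_one)
  moreover have "b^2 \<ge> 0" by simp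
  ultimately have "2 * d * s \<le> d" using sd d by linarith
  then have "2 * s \<le> 1" using d by (simp add: mult.commute mult.left_commute)
  then have s_le: "1 + s < 4" by linarith
  have e_sq: "(1 + e)^2 = 1 + s" using e_def s0 by simp
  have "sqrt (1 + s) < sqrt 4" using s_le by (simp only: real_sqrt_less_iff)
  then have "sqrt (1 + s) < 2" by simp
  then have e1: "e < 1" using e_def by simp
  have "e^2 < 1^2" by (rule power_strict_mono) (use e1 e0 in auto)
  then have pos: "4 - e^2 > 0" by simp
  define w where "w = sqrt (4 - e^2)"
  have w0: "w > 0" using pos w_def by simp
  have "w \<le> sqrt ((2 + e)^2)" unfolding w_def
    by (rule real_sqrt_le_mono) (use e0 in \<open>simp add: power2_eq_square algebra_simps\<close>)
  then have w2: "w \<le> 2 + e" using e0 by simp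
  have ew: "e * w > 0" using e0 w0 by simp
  have rew: "2 \<le> r * (e * w)" using hr ew unfolding w_def[symmetric]
    by (simp add: divide_le_eq mult.commute)
  then have "0 < r * (e * w)" by linarith
  then have r0: "r > 0" using ew by (simp add: zero_less_mult_iff)
  have "e * w \<le> e * (2 + e)" using w2 e0 by simp
  then have "r * (e * w) \<le> r * (e * (2 + e))" using r0 by simp
  moreover have "e * (2 + e) = s" using e_sq by (simp add: power2_eq_square algebra_simps)
  ultimately have rs: "r * s \<ge> 2" using rew by simp
  have "a^2 - b^2 \<le> 2 * (a - b)"
  proof -
    have "a^2 - b^2 = (a - b) * (a + b)" by (simp add: power2_eq_square algebra_simps)
    also have "\<dots> \<le> (a - b) * 2" using ab a1 b0 ab by (intro mult_left_mono) auto
    finally show ?thesis by simp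
  qed
  then have "r * (2 * d * s) \<le> r * (2 * (a - b))" using sd r0 by simp
  moreover have "r * (2 * d * s) \<ge> 4"
  proof -
    have "r * (2 * d * s) = 2 * d * (r * s)" by simp
    also have "\<dots> \<ge> 2 * 1 * 2" using d rs by (intro mult_mono) auto
    finally show ?thesis by simp
  qed
  ultimately have "4 \<le> 2 * (r * (a - b))" by (simp add: algebra_simps)
  then show ?thesis by simp
qed

theorem theorem1:
  fixes D K k :: nat and U :: "nat \<Rightarrow> nat \<Rightarrow> complex" and p :: "nat \<Rightarrow> real"
    and c c' :: nat
  assumes hk: "1 \<le> k" "k \<le> 2^K"
    and hU: "unitary_mat (2^(D+K)) U"
    and hp: "\<exists>i<2^D. p i \<noteq> 0"
    and hc: "c < k"
    and hcmax: "\<forall>c2<k. class_prob D K U (\<lambda>i. p i / vnorm (2^D) p) c2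
                        \<le> class_prob D K U (\<lambda>i. p i / vnorm (2^D) p) c"
    and hc': "c' < k" "c' \<noteq> c"
    and hc'max: "\<forall>c2<k. c2 \<noteq> c \<longrightarrow> class_prob D K U (\<lambda>i. p i / vnorm (2^D) p) c2
                        \<le> class_prob D K U (\<lambda>i. p i / vnorm (2^D) p) c'"
    and heps: "0 < sqrt (1 + (1 / (2 * real (2^D))) *
                 (qform D K U c (\<lambda>i. p i / vnorm (2^D) p) - qform D K U c' (\<lambda>i. p i / vnorm (2^D) p))) - 1"
    and hnorm: "let \<epsilon> = sqrt (1 + (1 / (2 * real (2^D))) *
                 (qform D K U c (\<lambda>i. p i / vnorm (2^D) p) - qform D K U c' (\<lambda>i. p i / vnorm (2^D) p))) - 1
                in vnorm (2^D) p \<ge> 2 / (\<epsilon> * sqrt (4 - \<epsilon>\<^sup>2))"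
  shows "\<forall>x :: nat \<Rightarrow> real. vnorm (2^D) x = 1 \<longrightarrow>
           (\<forall>ct<k. class_prob D K U (\<lambda>i. (p i + x i) / vnorm (2^D) (\<lambda>j. p j + x j)) ct
                  \<le> class_prob D K U (\<lambda>i. (p i + x i) / vnorm (2^D) (\<lambda>j. p j + x j)) c)"
proof (intro allI impI)
  fix x :: "nat \<Rightarrow> real" and ct :: nat
  assume vx: "vnorm (2^D) x = 1" and ct: "ct < k"
  define r where "r = vnorm (2^D) p"
  define q where "q = (\<lambda>i. p i / r)"
  define N where "N = (\<lambda>v. NN D K U v)"
  obtain i0 where i0: "i0 < 2^D" "p i0 \<noteq> 0" using hp by blast
  have "0 < (p i0)^2" using i0 by simp
  also have "\<dots> \<le> (\<Sum>i<(2::nat)^D. (p i)^2)" by (rule member_le_sum) (use i0 in auto)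
  finally have sp: "0 < (\<Sum>i<(2::nat)^D. (p i)^2)" .
  have r0: "r > 0" unfolding r_def vnorm_def using sp by simp
  have r2: "r^2 = (\<Sum>i<(2::nat)^D. (p i)^2)" unfolding r_def vnorm_def using sp by simp
  have sq: "(\<Sum>i<(2::nat)^D. (q i)^2) = 1"
    unfolding q_def using r0 r2 sp by (simp add: power_divide flip: sum_divide_distrib)
  have sx: "(\<Sum>i<(2::nat)^D. (x i)^2) = 1"
    using vx unfolding vnorm_def by (simp add: sum_nonneg)
  have cK: "c < 2^K" "ct < 2^K" "c' < 2^K" using hc ct hc' hk by auto
  have Nle: "N v cc \<le> 1" if "(\<Sum>i<(2::nat)^D. (v i)^2) = 1" "cc < 2^K" for v cc
  proof -
    have "(N v cc)^2 \<le> 1" using cp_le[OF hU that(2), of v] that(1) by (simp add: cp_NN N_def)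
    then show ?thesis by (metis power2_le_imp_le one_power2 zero_le_one)
  qed
  have N0: "N v cc \<ge> 0" for v cc by (simp add: N_def NN_def)
  have pq: "p = (\<lambda>i. r * q i)" using r0 by (auto simp: q_def)
  have Np: "N p cc = r * N q cc" for cc
    by (subst pq) (use r0 in \<open>simp add: N_def NN_scale\<close>)
  define u where "u = (\<lambda>i. p i + x i)"
  have "N u ct \<le> N p ct + N x ct" unfolding u_def N_def by (rule NN_add)
  also have "\<dots> \<le> r * N q ct + 1" using Np Nle[OF sx cK(2)] by simp
  finally have U1: "N u ct \<le> r * N q ct + 1" .
  have pu: "p = (\<lambda>i. u i + (-1) * x i)" by (auto simp: u_def)
  have "N p c = N (\<lambda>i. u i + (-1) * x i) c" by (subst pu) (rule refl)
  also have "\<dots> \<le> N u c + N (\<lambda>i. (-1) * x i) c" unfolding N_def by (rule NN_add)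
  also have "N (\<lambda>i. (-1) * x i) c = N x c" by (simp only: N_def NN_scale abs_neg_one mult_1)
  finally have "N p c \<le> N u c + N x c" .
  then have U2: "r * N q c - 1 \<le> N u c" using Np Nle[OF sx cK(1)] by simp
  have key: "r * (N q c - N q c') \<ge> 2"
  proof (rule eps_arith)
    show "real (2^D) \<ge> 1" by simp
    show "N q c \<le> 1" by (rule Nle[OF sq cK(1)])
    show "N q c \<ge> 0" "N q c' \<ge> 0" by (rule N0)+
    show "1 / (2 * real (2^D)) * ((N q c)^2 - (N q c')^2) = 1 / (2 * real (2^D)) * ((N q c)^2 - (N q c')^2)" ..
    show "0 < sqrt (1 + 1 / (2 * real (2^D)) * ((N q c)^2 - (N q c')^2)) - 1"
      using heps by (simp add: qform_cp cp_NN N_def q_def r_def)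
    show "r \<ge> 2 / ((sqrt (1 + 1 / (2 * real (2^D)) * ((N q c)^2 - (N q c')^2)) - 1) *
        sqrt (4 - (sqrt (1 + 1 / (2 * real (2^D)) * ((N q c)^2 - (N q c')^2)) - 1)^2))"
      using hnorm by (simp add: Let_def qform_cp cp_NN N_def q_def r_def)
  qed (rule refl)
  show "class_prob D K U (\<lambda>i. (p i + x i) / vnorm (2^D) (\<lambda>j. p j + x j)) ct
                  \<le> class_prob D K U (\<lambda>i. (p i + x i) / vnorm (2^D) (\<lambda>j. p j + x j)) c"
  proof (cases "ct = c")
    case False
    then have "class_prob D K U q ct \<le> class_prob D K U q c'" using hc'max ct unfolding q_def r_def by blast
    then have "(N q ct)^2 \<le> (N q c')^2" by (simp add: cp_NN N_def)
    then have bq: "N q ct \<le> N q c'" using N0 by (meson power2_le_imp_le)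
    have "r * N q ct \<le> r * N q c'" using bq r0 by simp
    have "N u ct \<le> N u c" using U1 U2 key \<open>r * N q ct \<le> r * N q c'\<close>
      by (simp only: right_diff_distrib)
    then have "(N u ct)^2 \<le> (N u c)^2" by (rule power_mono) (rule N0)
    then have cpu: "class_prob D K U u ct \<le> class_prob D K U u c"
      by (simp only: cp_NN N_def)
    have eqf: "(\<lambda>i. (p i + x i) / vnorm (2^D) (\<lambda>j. p j + x j)) = (\<lambda>i. (1 / vnorm (2^D) u) * u i)"
      unfolding u_def by (rule ext) simp
    have "(1 / vnorm (2^D) u)^2 * class_prob D K U u ct \<le> (1 / vnorm (2^D) u)^2 * class_prob D K U u c"
      using cpu by (rule mult_left_mono) simp
    then show ?thesis by (simp only: eqf cp_scale)
  qed simp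
qed

end
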